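(* Let $m_1\in\mathbb N$, $\theta=(\theta_1,\dots,\theta_{m_1})$ with $\theta_i>0$, and let $u=(u_1,\dots,u_{m_1})$ be a function of $t$ with values in $[0,\infty)^{m_1}$, differentiable in $t$. For integers $p\ge0$ let $\mathcal H_p[u]=\sum_{\beta\in\mathbb Z_+^{m_1},|\beta|=p}\binom{p}{\beta}\theta^{\beta^2}u^\beta$. Then $\partial_t\mathcal H_0[u]=0$, $\partial_t\mathcal H_1[u]=\sum_{j=1}^{m_1}\theta_j\partial_tu_j$, and for every integer $p\ge2$, $$\partial_t\mathcal H_p[u]=\sum_{|\beta|=p-1}\binom{p}{\beta}\theta^{\beta^2}u^\beta\sum_{j=1}^{m_1}\theta_j^{2\beta_j+1}\partial_tu_j.$$
   Context: $\mathbb Z_+^{m}$ is the set of $m$-tuples of nonnegative integers; for $\beta\in\mathbb Z_+^m$, $|\beta|=\sum_i\beta_i$, $\beta^2=(\beta_1^2,\dots,\beta_m^2)$, $z^\alpha=\prod_iz_i^{\alpha_i}$ with $0^0=1$, and $\binom{p}{\beta}=\frac{p!}{\beta_1!\cdots\beta_m!}$ (also used when $|\beta|<p$). *)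

theory Defs
  imports Complex_Main
begin

text \<open>Multi-indices in Z_+^m are represented as functions nat => nat vanishing outside {..<m}
 (coordinates are indexed 0..m-1).\<close>

definition multi_indices :: "nat \<Rightarrow> nat \<Rightarrow> (nat \<Rightarrow> nat) set" where
  "multi_indices m p = {\<beta>. (\<forall>i. m \<le> i \<longrightarrow> \<beta> i = 0) \<and> (\<Sum>i<m. \<beta> i) = p}"

text \<open>Multinomial coefficient p!/(beta_1! ... beta_m!), also used when |beta| < p.\<close>
definition multinom :: "nat \<Rightarrow> nat \<Rightarrow> (nat \<Rightarrow> nat) \<Rightarrow> real" where
  "multinom m p \<beta> = fact p / (\<Prod>i<m. fact (\<beta> i))"

definition wmono :: "nat \<Rightarrow> (nat \<Rightarrow> real) \<Rightarrow> (nat \<Rightarrow> nat) \<Rightarrow> (nat \<Rightarrow> real) \<Rightarrow> real" where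
  "wmono m \<theta> \<beta> u = (\<Prod>i<m. \<theta> i ^ ((\<beta> i)\<^sup>2) * u i ^ \<beta> i)"

definition Hp :: "nat \<Rightarrow> (nat \<Rightarrow> real) \<Rightarrow> nat \<Rightarrow> (nat \<Rightarrow> real) \<Rightarrow> real" where
  "Hp m \<theta> p u = (\<Sum>\<beta>\<in>multi_indices m p. multinom m p \<beta> * wmono m \<theta> \<beta> u)"

end

theory Submission
  imports Defs
begin

lemma mi_finite: "finite (multi_indices m p)"
proof -
  have "multi_indices m p \<subseteq> {f. \<forall>x. (x \<in> {..<m} \<longrightarrow> f x \<in> {..p}) \<and> (x \<notin> {..<m} \<longrightarrow> f x = 0)}"
  proof
    fix \<beta> assume b: "\<beta> \<in> multi_indices m p"
    have "\<beta> i \<le> p" if "i < m" for i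
    proof -
      have "\<beta> i \<le> (\<Sum>i<m. \<beta> i)" using that by (intro member_le_sum) auto
      thus ?thesis using b by (simp add: multi_indices_def)
    qed
    thus "\<beta> \<in> {f. \<forall>x. (x \<in> {..<m} \<longrightarrow> f x \<in> {..p}) \<and> (x \<notin> {..<m} \<longrightarrow> f x = 0)}"
      using b by (auto simp: multi_indices_def)
  qed
  moreover have "finite {f::nat\<Rightarrow>nat. \<forall>x. (x \<in> {..<m} \<longrightarrow> f x \<in> {..p}) \<and> (x \<notin> {..<m} \<longrightarrow> f x = 0)}"
    by (rule finite_set_of_finite_funs) auto
  ultimately show ?thesis by (rule finite_subset)
qed

definition Dt :: "nat \<Rightarrow> (nat \<Rightarrow> real) \<Rightarrow> (nat \<Rightarrow> nat) \<Rightarrow> (nat \<Rightarrow> real) \<Rightarrow> (nat \<Rightarrow> real) \<Rightarrow> nat \<Rightarrow> real" where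
  "Dt m \<theta> \<beta> v v' j = (\<Prod>i\<in>{..<m}-{j}. \<theta> i ^ (\<beta> i)\<^sup>2 * v i ^ \<beta> i)
      * (\<theta> j ^ (\<beta> j)\<^sup>2 * (real (\<beta> j) * v j ^ (\<beta> j - 1) * v' j))"

lemma deriv_wmono:
  assumes "\<forall>j<m. ((\<lambda>s. u s j) has_real_derivative u' j) (at t)"
  shows "((\<lambda>s. wmono m \<theta> \<beta> (u s)) has_real_derivative (\<Sum>j<m. Dt m \<theta> \<beta> (u t) u' j)) (at t)"
proof -
  have "((\<lambda>s. \<Prod>i<m. \<theta> i ^ ((\<beta> i)\<^sup>2) * u s i ^ \<beta> i) has_real_derivative
     (\<Sum>j<m. (\<theta> j ^ (\<beta> j)\<^sup>2 * (of_nat (\<beta> j) * (u' j * u t j ^ (\<beta> j - Suc 0)))) *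
        (\<Prod>i\<in>{..<m}-{j}. \<theta> i ^ (\<beta> i)\<^sup>2 * u t i ^ \<beta> i))) (at t)"
    by (rule has_field_derivative_prod, rule DERIV_cmult, rule DERIV_power, use assms in auto)
  thus ?thesis unfolding wmono_def Dt_def by (simp add: mult_ac)
qed

lemma deriv_Hp:
  assumes "\<forall>j<m. ((\<lambda>s. u s j) has_real_derivative u' j) (at t)"
  shows "((\<lambda>s. Hp m \<theta> p (u s)) has_real_derivative
     (\<Sum>\<beta>\<in>multi_indices m p. multinom m p \<beta> * (\<Sum>j<m. Dt m \<theta> \<beta> (u t) u' j))) (at t)"
  unfolding Hp_def
  by (rule DERIV_sum, rule DERIV_cmult, rule deriv_wmono[OF assms])

lemma term_eq:
  fixes \<gamma> :: "nat \<Rightarrow> nat"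
  assumes j: "j < m"
  defines "\<beta> \<equiv> (\<lambda>i. \<gamma> i + (if i = j then 1 else 0))"
  shows "multinom m p \<beta> * Dt m \<theta> \<beta> v v' j
     = multinom m p \<gamma> * wmono m \<theta> \<gamma> v * (\<theta> j ^ (2 * \<gamma> j + 1) * v' j)"
proof -
  have bj: "\<beta> j = \<gamma> j + 1" by (simp add: \<beta>_def)
  have bi: "\<And>i. i \<noteq> j \<Longrightarrow> \<beta> i = \<gamma> i" by (simp add: \<beta>_def)
  define Q where "Q = (\<Prod>i\<in>{..<m}-{j}. \<theta> i ^ (\<gamma> i)\<^sup>2 * v i ^ \<gamma> i)"
  define P where "P = (\<Prod>i\<in>{..<m}-{j}. (fact (\<gamma> i) :: real))"
  have Qb: "(\<Prod>i\<in>{..<m}-{j}. \<theta> i ^ (\<beta> i)\<^sup>2 * v i ^ \<beta> i) = Q"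
    unfolding Q_def by (rule prod.cong) (auto simp: bi)
  have Pb: "(\<Prod>i\<in>{..<m}-{j}. (fact (\<beta> i) :: real)) = P"
    unfolding P_def by (rule prod.cong) (auto simp: bi)
  have jm: "j \<in> {..<m}" using j by simp
  have Fb: "(\<Prod>i<m. (fact (\<beta> i) :: real)) = fact (\<gamma> j + 1) * P"
    using prod.remove[OF finite_lessThan jm, of "\<lambda>i. (fact (\<beta> i) :: real)"] Pb bj by simp
  have Fg: "(\<Prod>i<m. (fact (\<gamma> i) :: real)) = fact (\<gamma> j) * P"
    using prod.remove[OF finite_lessThan jm, of "\<lambda>i. (fact (\<gamma> i) :: real)"] P_def by simp
  have W: "wmono m \<theta> \<gamma> v = \<theta> j ^ (\<gamma> j)\<^sup>2 * v j ^ \<gamma> j * Q"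
    unfolding wmono_def Q_def using prod.remove[OF finite_lessThan jm, of "\<lambda>i. \<theta> i ^ (\<gamma> i)\<^sup>2 * v i ^ \<gamma> i"] by simp
  have D: "Dt m \<theta> \<beta> v v' j = Q * (\<theta> j ^ (\<gamma> j + 1)\<^sup>2 * (real (\<gamma> j + 1) * v j ^ \<gamma> j * v' j))"
    unfolding Dt_def Qb bj by simp
  have Pnz: "P \<noteq> 0" unfolding P_def by simp
  have th: "\<theta> j ^ (\<gamma> j + 1)\<^sup>2 = \<theta> j ^ (\<gamma> j)\<^sup>2 * \<theta> j ^ (2 * \<gamma> j + 1)"
  proof -
    have "(\<gamma> j + 1)\<^sup>2 = (\<gamma> j)\<^sup>2 + (2 * \<gamma> j + 1)" by (simp add: power2_eq_square algebra_simps)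
    thus ?thesis by (simp add: power_add)
  qed
  have ff: "(fact (\<gamma> j + 1) :: real) = (real (\<gamma> j) + 1) * fact (\<gamma> j)" by simp
  show ?thesis
  proof -
    have Fnz: "(fact (\<gamma> j) :: real) \<noteq> 0" by simp
    have anz: "real (\<gamma> j) + 1 \<noteq> 0" by simp
    show ?thesis
      unfolding multinom_def Fb Fg W D th ff using Pnz Fnz anz
      by (simp add: divide_simps)
  qed
qed

lemma sum_j:
  assumes j: "j < m" and p: "p \<ge> 1"
  shows "(\<Sum>\<beta>\<in>multi_indices m p. multinom m p \<beta> * Dt m \<theta> \<beta> v v' j)
     = (\<Sum>\<gamma>\<in>multi_indices m (p - 1). multinom m p \<gamma> * wmono m \<theta> \<gamma> v * (\<theta> j ^ (2 * \<gamma> j + 1) * v' j))"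
proof -
  define h where "h = (\<lambda>(\<gamma>::nat\<Rightarrow>nat) i. \<gamma> i + (if i = j then 1 else 0))"
  define h' where "h' = (\<lambda>(\<gamma>::nat\<Rightarrow>nat) i. \<gamma> i - (if i = j then 1 else 0))"
  define S where "S = {\<beta>\<in>multi_indices m p. 0 < \<beta> j}"
  have jm: "j \<in> {..<m}" using j by simp
  have sd: "(\<Sum>i<m. (if i = j then 1 else 0::nat)) = 1" using jm by simp
  have bij: "bij_betw h (multi_indices m (p - 1)) S"
  proof (rule bij_betw_byWitness[where f'=h'])
    show "\<forall>a\<in>multi_indices m (p - 1). h' (h a) = a" by (auto simp: h_def h'_def)
    show "\<forall>a\<in>S. h (h' a) = a" by (auto simp: h_def h'_def S_def)
    show "h ` multi_indices m (p - 1) \<subseteq> S"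
    proof
      fix b assume "b \<in> h ` multi_indices m (p - 1)"
      then obtain g where g: "g \<in> multi_indices m (p - 1)" "b = h g" by blast
      have "(\<Sum>i<m. b i) = (\<Sum>i<m. g i) + 1"
        unfolding g(2) h_def by (simp add: sum.distrib sd del: sum.delta)
      thus "b \<in> S" using g p j by (auto simp: S_def multi_indices_def h_def)
    qed
    show "h' ` S \<subseteq> multi_indices m (p - 1)"
    proof
      fix b assume "b \<in> h' ` S"
      then obtain g where g: "g \<in> S" "b = h' g" by blast
      have "g = h b" using g by (auto simp: h_def h'_def S_def)
      hence "(\<Sum>i<m. g i) = (\<Sum>i<m. b i) + 1"
        unfolding h_def by (simp add: sum.distrib sd del: sum.delta)
      thus "b \<in> multi_indices m (p - 1)" using g p j by (auto simp: S_def multi_indices_def h'_def)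
    qed
  qed
  have "(\<Sum>\<beta>\<in>multi_indices m p. multinom m p \<beta> * Dt m \<theta> \<beta> v v' j)
      = (\<Sum>\<beta>\<in>S. multinom m p \<beta> * Dt m \<theta> \<beta> v v' j)"
    unfolding S_def by (rule sum.mono_neutral_right) (auto simp: mi_finite Dt_def)
  also have "(\<Sum>\<beta>\<in>S. multinom m p \<beta> * Dt m \<theta> \<beta> v v' j)
     = (\<Sum>\<gamma>\<in>multi_indices m (p - 1). multinom m p (h \<gamma>) * Dt m \<theta> (h \<gamma>) v v' j)"
    using bij by (rule sum.reindex_bij_betw[symmetric])
  also have "\<dots> = (\<Sum>\<gamma>\<in>multi_indices m (p - 1). multinom m p \<gamma> * wmono m \<theta> \<gamma> v * (\<theta> j ^ (2 * \<gamma> j + 1) * v' j))"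
    by (rule sum.cong) (auto simp: h_def term_eq[OF j])
  finally show ?thesis .
qed

lemma mi0: "multi_indices m 0 = {\<lambda>_. 0}"
  by (auto simp: multi_indices_def fun_eq_iff) (metis lessThan_iff not_le)

lemma gen:
  assumes "\<forall>j<m. ((\<lambda>s. u s j) has_real_derivative u' j) (at t)" and p: "p \<ge> 1"
  shows "((\<lambda>s. Hp m \<theta> p (u s)) has_real_derivative
        (\<Sum>\<beta>\<in>multi_indices m (p - 1). multinom m p \<beta> * wmono m \<theta> \<beta> (u t)
            * (\<Sum>j<m. \<theta> j ^ (2 * \<beta> j + 1) * u' j))) (at t)"
proof -
  have "(\<Sum>\<beta>\<in>multi_indices m p. multinom m p \<beta> * (\<Sum>j<m. Dt m \<theta> \<beta> (u t) u' j))
     = (\<Sum>j<m. \<Sum>\<beta>\<in>multi_indices m p. multinom m p \<beta> * Dt m \<theta> \<beta> (u t) u' j)"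
    by (simp add: sum_distrib_left sum.swap[of _ "multi_indices m p"])
  also have "\<dots> = (\<Sum>j<m. \<Sum>\<gamma>\<in>multi_indices m (p - 1). multinom m p \<gamma> * wmono m \<theta> \<gamma> (u t) * (\<theta> j ^ (2 * \<gamma> j + 1) * u' j))"
    by (rule sum.cong) (use sum_j p in blast)+
  also have "\<dots> = (\<Sum>\<beta>\<in>multi_indices m (p - 1). multinom m p \<beta> * wmono m \<theta> \<beta> (u t)
            * (\<Sum>j<m. \<theta> j ^ (2 * \<beta> j + 1) * u' j))"
    by (simp add: sum_distrib_left sum.swap[of _ "{..<m}"])
  finally show ?thesis using deriv_Hp[OF assms(1), of \<theta> p] by simp
qed

theorem lemmaA1:
  fixes m :: nat and \<theta> :: "nat \<Rightarrow> real" and u :: "real \<Rightarrow> nat \<Rightarrow> real"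
    and u' :: "nat \<Rightarrow> real" and t :: real
  assumes "\<forall>i<m. \<theta> i > 0"
    and "\<forall>s. \<forall>i<m. u s i \<ge> 0"
    and "\<forall>j<m. ((\<lambda>s. u s j) has_real_derivative u' j) (at t)"
  shows "((\<lambda>s. Hp m \<theta> 0 (u s)) has_real_derivative 0) (at t)
    \<and> ((\<lambda>s. Hp m \<theta> 1 (u s)) has_real_derivative (\<Sum>j<m. \<theta> j * u' j)) (at t)
    \<and> (\<forall>p::nat. p \<ge> 2 \<longrightarrow>
      ((\<lambda>s. Hp m \<theta> p (u s)) has_real_derivative
        (\<Sum>\<beta>\<in>multi_indices m (p - 1). multinom m p \<beta> * wmono m \<theta> \<beta> (u t)
            * (\<Sum>j<m. \<theta> j ^ (2 * \<beta> j + 1) * u' j))) (at t))"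
proof (intro conjI allI impI)
  show "((\<lambda>s. Hp m \<theta> 0 (u s)) has_real_derivative 0) (at t)"
    using deriv_Hp[OF assms(3), of \<theta> 0] by (simp add: mi0 Dt_def)
  show "((\<lambda>s. Hp m \<theta> 1 (u s)) has_real_derivative (\<Sum>j<m. \<theta> j * u' j)) (at t)"
    using gen[OF assms(3), of 1 \<theta>] by (simp add: mi0 multinom_def wmono_def)
  fix p :: nat assume "p \<ge> 2"
  thus "((\<lambda>s. Hp m \<theta> p (u s)) has_real_derivative
        (\<Sum>\<beta>\<in>multi_indices m (p - 1). multinom m p \<beta> * wmono m \<theta> \<beta> (u t)
            * (\<Sum>j<m. \<theta> j ^ (2 * \<beta> j + 1) * u' j))) (at t)"
    using gen[OF assms(3), of p \<theta>] by simp
qed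

end
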